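(* For every integer $n\ge1$, $$\exp\!\left(\pi\sqrt{\tfrac{2n}{3}}\left(\sqrt{1-\tfrac{1}{24n}}-1\right)\right)=\sum_{t=0}^\infty e_1(t)\,n^{-t}+\sum_{t=0}^\infty o_1(t)\,n^{-(2t+1)/2},$$ where $e_1(0)=1$, $$e_1(t)=\frac{(-1)^t}{24^t}\frac{(1/2-t)_{t+1}}{t}\sum_{u=1}^t\frac{(-1)^u(-t)_u}{(t+u)!\,(2u-1)!}\left(\frac{\pi^2}{36}\right)^u\quad(t\ge1),$$ $$o_1(t)=-\frac{\pi}{12\sqrt6}\cdot\frac{(-1)^t(1/2-t)_{t+1}}{24^t}\sum_{u=0}^t\frac{(-1)^u(-t)_u}{(t+u+1)!\,(2u)!}\left(\frac{\pi^2}{36}\right)^u\quad(t\ge0).$$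
   Context: $(a)_m=a(a+1)\cdots(a+m-1)$ denotes the rising factorial (Pochhammer symbol), with $(a)_0=1$. *)

theory Defs
  imports Complex_Main
begin

text \<open>Coefficients e_1(t) and o_1(t); (a)_m is the rising factorial, i.e. pochhammer a m.\<close>

definition e1 :: "nat \<Rightarrow> real" where
  "e1 t = (if t = 0 then 1 else
     ((-1) ^ t / 24 ^ t) * (pochhammer (1/2 - real t) (t + 1) / real t) *
     (\<Sum>u = 1..t. ((-1) ^ u * pochhammer (- real t) u / (fact (t + u) * fact (2 * u - 1)))
                   * (pi\<^sup>2 / 36) ^ u))"

definition o1 :: "nat \<Rightarrow> real" where
  "o1 t = - (pi / (12 * sqrt 6)) *
     ((-1) ^ t * pochhammer (1/2 - real t) (t + 1) / 24 ^ t) *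
     (\<Sum>u = 0..t. ((-1) ^ u * pochhammer (- real t) u / (fact (t + u + 1) * fact (2 * u)))
                   * (pi\<^sup>2 / 36) ^ u)"

end

theory Submission
  imports Defs "HOL-Analysis.Analysis"
begin


definition bt :: "nat \<Rightarrow> nat \<Rightarrow> real" where
"bt m k = (if k = 0 then (if m = 0 then 1 else 0) else if m < k then 0
   else (-1)^k * fact (2*m-k-1) / (2^(2*m-k) * fact (m-k) * fact m * fact (k-1)))"

lemma bt_form: "bt (Suc j + r) (Suc j) = (-1)^(Suc j) * fact (j+2*r) / (2^(Suc j + 2*r) * fact r * fact (Suc j + r) * fact j)"
  unfolding bt_def by (simp add: algebra_simps)

lemma nz1[simp]: "0 < c \<Longrightarrow> (c::real) + real i \<noteq> 0" by (smt (verit) of_nat_0_le_iff)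
lemma nz2[simp]: "0 < c \<Longrightarrow> (c::real) + real i + real j \<noteq> 0" by (smt (verit) of_nat_0_le_iff)
lemma nz3[simp]: "0 < c \<Longrightarrow> (c::real) + (real i + real j) \<noteq> 0" by (smt (verit) of_nat_0_le_iff)

lemma bt_big: "m < k \<Longrightarrow> bt m k = 0" unfolding bt_def by auto

lemma f1: "(fact (Suc n) :: real) = (n+1) * fact n" by (simp add: fact_Suc algebra_simps)

lemma bt_rec: "4*(m+2)*(m+1)*bt (m+2) k = (m+1)*(4*m+2)*bt (m+1) k + (if k \<ge> 2 then bt m (k-2) else 0)"
proof (cases k)
  case 0 then show ?thesis by (simp add: bt_def)
next
  case (Suc j)
  show ?thesis
  proof (cases "m+2 < k")
    case True then show ?thesis by (simp add: bt_big)
  next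
    case False
    then obtain r where r: "m+2 = k + r" by (metis le_add_diff_inverse not_less)
    consider "r = 0" | "r = 1" | r' where "r = r'+2" by (metis add_2_eq_Suc' not0_implies_Suc One_nat_def)
    then show ?thesis
    proof cases
      case 1
      then have mk: "k = m+2" using r by simp
      show ?thesis
      proof (cases m)
        case 0 then show ?thesis using mk by (simp add: bt_def)
      next
        case (Suc i)
        have e1: "bt (m+2) k = bt (Suc (Suc (Suc i)) + 0) (Suc (Suc (Suc i)))" using mk Suc by simp
        have e2: "bt m (k-2) = bt (Suc i + 0) (Suc i)" using mk Suc by simp
        show ?thesis using mk Suc unfolding e1 e2 bt_form
          apply (simp add: bt_big)
          apply (simp add: divide_simps)
          done
      qed
    next
      case 2
      then have mj: "m = j" using r Suc by simp
      consider "j = 0" | "j = 1" | i where "j = Suc (Suc i)" by (metis One_nat_def not0_implies_Suc)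
      then show ?thesis
      proof cases
        case 1 then show ?thesis using mj Suc by (simp add: bt_def)
      next
        case 2
        have "fact 3 = (6::real)" by (simp add: numeral_3_eq_3 fact_Suc)
        then show ?thesis using 2 mj Suc by (simp add: bt_def)
      next
        case 3
        have e1: "bt (m+2) k = bt (Suc (Suc (Suc i)) + Suc 0) (Suc (Suc (Suc i)))" using 3 mj Suc by simp
        have e2: "bt (m+1) k = bt (Suc (Suc (Suc i)) + 0) (Suc (Suc (Suc i)))" using 3 mj Suc by simp
        have e3: "bt m (k-2) = bt (Suc i + Suc 0) (Suc i)" using 3 mj Suc by simp
        show ?thesis using 3 mj Suc unfolding e1 e2 e3 bt_form
          apply (simp only: add_Suc add_Suc_right mult_Suc_right fact_Suc power_Suc add_0_right mult_0_right)
          apply (simp add: divide_simps)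
          apply (simp add: algebra_simps)?
          done
      qed
    next
      case 3
      then have mj: "m = Suc j + r'" using r Suc by simp
      consider "j = 0" | "j = 1" | i where "j = Suc (Suc i)" by (metis One_nat_def not0_implies_Suc)
      then show ?thesis
      proof cases
        case 1
        have e1: "bt (m+2) k = bt (Suc 0 + Suc (Suc r')) (Suc 0)" using 1 mj Suc by simp
        have e2: "bt (m+1) k = bt (Suc 0 + Suc r') (Suc 0)" using 1 mj Suc by simp
        show ?thesis using 1 mj Suc unfolding e1 e2 bt_form
          apply (simp only: add_Suc add_Suc_right mult_Suc_right fact_Suc power_Suc add_0_right mult_0_right)
          apply (simp add: divide_simps)
          apply (simp add: algebra_simps)?
          done
      next
        case 2
        have e1: "bt (m+2) k = bt (Suc (Suc 0) + Suc (Suc r')) (Suc (Suc 0))" using 2 mj Suc by simp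
        have e2: "bt (m+1) k = bt (Suc (Suc 0) + Suc r') (Suc (Suc 0))" using 2 mj Suc by simp
        have e3: "bt m (k-2) = 0" using 2 mj Suc by (simp add: bt_def)
        show ?thesis using 2 mj Suc unfolding e1 e2 e3 bt_form
          apply (simp only: add_Suc add_Suc_right mult_Suc_right fact_Suc power_Suc add_0_right mult_0_right)
          apply (simp add: divide_simps)
          apply (simp add: algebra_simps)?
          done
      next
        case 3
        have e1: "bt (m+2) k = bt (Suc (Suc (Suc i)) + Suc (Suc r')) (Suc (Suc (Suc i)))" using 3 mj Suc by simp
        have e2: "bt (m+1) k = bt (Suc (Suc (Suc i)) + Suc r') (Suc (Suc (Suc i)))" using 3 mj Suc by simp
        have e3: "bt m (k-2) = bt (Suc i + Suc (Suc r')) (Suc i)" using 3 mj Suc by simp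
        show ?thesis using 3 mj Suc unfolding e1 e2 e3 bt_form
          apply (simp only: add_Suc add_Suc_right mult_Suc_right fact_Suc power_Suc add_0_right mult_0_right)
          apply (simp add: divide_simps)
          apply (simp add: algebra_simps)?
          done
      qed
    qed
  qed
qed

definition bb :: "real \<Rightarrow> nat \<Rightarrow> real" where "bb a m = (\<Sum>k\<le>m. bt m k * a^k)"

lemma bb_ext: "m \<le> N \<Longrightarrow> bb a m = (\<Sum>k\<le>N. bt m k * a^k)"
  unfolding bb_def by (rule sum.mono_neutral_left) (auto simp: bt_big)

lemma bb0: "bb a 0 = 1" by (simp add: bb_def bt_def)
lemma bb1: "bb a 1 = - a/2" by (simp add: bb_def bt_def)

lemma bb_rec: "4*(m+2)*(m+1)*bb a (m+2) = (m+1)*(4*m+2)*bb a (m+1) + a^2 * bb a m"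
proof -
  have "4*(m+2)*(m+1)*bb a (m+2) = (\<Sum>k\<le>m+2. (4*(m+2)*(m+1)*bt (m+2) k) * a^k)"
    by (simp only: bb_def sum_distrib_left mult.assoc)
  also have "\<dots> = (\<Sum>k\<le>m+2. ((m+1)*(4*m+2)*bt (m+1) k) * a^k + (if k \<ge> 2 then bt m (k-2) else 0) * a^k)"
  proof (rule sum.cong[OF refl])
    fix k
    have "real (4*(m+2)*(m+1)) * bt (m+2) k = real ((m+1)*(4*m+2)) * bt (m+1) k + (if k \<ge> 2 then bt m (k-2) else 0)"
      using bt_rec[of m k] by (simp add: algebra_simps)
    then show "real (4*(m+2)*(m+1)) * bt (m+2) k * a^k = real ((m+1)*(4*m+2)) * bt (m+1) k * a^k + (if k \<ge> 2 then bt m (k-2) else 0) * a^k"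
      by (metis distrib_right)
  qed
  also have "\<dots> = (m+1)*(4*m+2)*(\<Sum>k\<le>m+2. bt (m+1) k * a^k) + (\<Sum>k\<le>Suc (Suc m). (if k \<ge> 2 then bt m (k-2) else 0) * a^k)"
    by (simp only: sum.distrib sum_distrib_left mult.assoc numeral_2_eq_2 add_Suc_right add_0_right)
  finally have X: "4*(m+2)*(m+1)*bb a (m+2) = (m+1)*(4*m+2)*(\<Sum>k\<le>m+2. bt (m+1) k * a^k) + (\<Sum>k\<le>Suc (Suc m). (if k \<ge> 2 then bt m (k-2) else 0) * a^k)" .
  have Y: "(\<Sum>k\<le>Suc (Suc m). (if k \<ge> 2 then bt m (k-2) else 0) * a^k) = a^2 * bb a m"
    unfolding bb_def by (simp only: sum.atMost_Suc_shift) (simp add: power2_eq_square algebra_simps sum_distrib_left)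
  have Z: "(\<Sum>k\<le>m+2. bt (m+1) k * a^k) = bb a (m+1)" by (rule bb_ext[symmetric]) simp
  show ?thesis using X unfolding Y Z by (simp add: algebra_simps)
qed

lemma bt_sign: "bt m k * (-1)^k \<ge> 0"
proof -
  define X where "X = (if k = 0 then (if m = 0 then 1 else 0) else if m < k then 0
   else fact (2*m-k-1) / (2^(2*m-k) * fact (m-k) * fact m * fact (k-1)) :: real)"
  have X: "X \<ge> 0" unfolding X_def by simp
  have "bt m k = (-1)^k * X" unfolding bt_def X_def by auto
  then have "bt m k * (-1)^k = ((-1)^k * (-1)^k) * X" by simp
  also have "(-1::real)^k * (-1)^k = 1" by (simp add: power_mult_distrib[symmetric])
  finally show ?thesis using X by simp
qed

lemma bb_abs: "(\<Sum>k\<le>m. \<bar>bt m k * a^k\<bar>) = bb (-\<bar>a\<bar>) m"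
  unfolding bb_def
proof (rule sum.cong)
  fix k
  have "(-\<bar>a\<bar>)^k = (-1)^k * \<bar>a\<bar>^k" by (rule power_minus)
  then have "bt m k * (-\<bar>a\<bar>)^k = (bt m k * (-1)^k) * \<bar>a\<bar>^k" by simp
  also have "\<dots> = \<bar>bt m k * (-1)^k\<bar> * \<bar>a\<bar>^k" using bt_sign[of m k] by simp
  also have "\<dots> = \<bar>bt m k * a^k\<bar>" by (simp add: abs_mult power_abs)
  finally show "\<bar>bt m k * a^k\<bar> = bt m k * (-\<bar>a\<bar>)^k" by simp
qed simp

lemma bb_bound: "\<bar>bb a m\<bar> \<le> (1 + a^2)^m"
proof -
  let ?R = "1 + a^2"
  have R1: "?R \<ge> 1" by simp
  have "\<bar>bb a m\<bar> \<le> ?R^m \<and> \<bar>bb a (m+1)\<bar> \<le> ?R^(m+1)"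
  proof (induction m)
    case 0
    have "\<bar>a\<bar> \<le> 1 + a^2"
    proof (cases "\<bar>a\<bar> \<le> 1")
      case False
      then have "\<bar>a\<bar> * 1 \<le> \<bar>a\<bar> * \<bar>a\<bar>" by (intro mult_left_mono) auto
      then show ?thesis by (simp add: power2_eq_square)
    qed (smt (verit) zero_le_power2)
    then show ?case using bb1[of a] by (simp add: bb0)
  next
    case (Suc m)
    have p0: "\<bar>bb a m\<bar> \<le> ?R^m" "\<bar>bb a (m+1)\<bar> \<le> ?R^(m+1)" using Suc by auto
    define c1 :: real where "c1 = (m+1)*(4*m+2)"
    define c2 :: real where "c2 = 4*(m+2)*(m+1)"
    have c1: "c1 \<ge> 0" unfolding c1_def by simp
    have pos: "c2 > 0" unfolding c2_def by (simp add: add_pos_nonneg)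
    have rec: "c2 * bb a (m+2) = c1 * bb a (m+1) + a^2 * bb a m"
      unfolding c1_def c2_def using bb_rec[of m a] by (simp add: algebra_simps)
    have "c2 * \<bar>bb a (m+2)\<bar> = \<bar>c1 * bb a (m+1) + a^2 * bb a m\<bar>"
      using rec pos by (metis abs_mult abs_of_pos)
    also have "\<dots> \<le> \<bar>c1 * bb a (m+1)\<bar> + \<bar>a^2 * bb a m\<bar>" by (rule abs_triangle_ineq)
    also have "\<dots> = c1 * \<bar>bb a (m+1)\<bar> + a^2 * \<bar>bb a m\<bar>" using c1 by (simp add: abs_mult)
    also have "\<dots> \<le> c1 * ?R^(m+1) + a^2 * ?R^m"
      by (intro add_mono mult_left_mono p0 c1) auto
    also have "\<dots> \<le> c2 * ?R^(m+2)"
    proof -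
      have A: "?R^(m+1) \<le> ?R^(m+2)" by (intro power_increasing) auto
      have "?R * 1 \<le> ?R * ?R" by (intro mult_left_mono R1) auto
      then have "a^2 \<le> ?R^2" by (simp add: power2_eq_square)
      then have "a^2 * ?R^m \<le> ?R^2 * ?R^m"
        by (intro mult_right_mono) auto
      then have B: "a^2 * ?R^m \<le> ?R^(m+2)" by (simp add: power_add power2_eq_square algebra_simps)
      have "c1 * ?R^(m+1) \<le> c1 * ?R^(m+2)" by (intro mult_left_mono A c1)
      moreover have "c1 + 1 \<le> c2" unfolding c1_def c2_def by (simp add: algebra_simps)
      then have "(c1 + 1) * ?R^(m+2) \<le> c2 * ?R^(m+2)" by (intro mult_right_mono) auto
      then have "c1 * ?R^(m+2) + ?R^(m+2) \<le> c2 * ?R^(m+2)" by (simp add: distrib_right)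
      ultimately show ?thesis using B by linarith
    qed
    finally have "c2 * \<bar>bb a (m+2)\<bar> \<le> c2 * ?R^(m+2)" .
    then have "\<bar>bb a (m+2)\<bar> \<le> ?R^(m+2)" using pos by simp
    then show ?case using p0 by simp
  qed
  then show ?thesis by simp
qed



lemma bb_summable:
  assumes "\<bar>x\<bar> < 1/(1+a^2)"
  shows "summable (\<lambda>m. bb a m * x^m)"
proof (rule summable_comparison_test)
  let ?R = "1 + a^2"
  have R: "?R > 0" by (simp add: add_pos_nonneg)
  have e: "\<bar>?R * x\<bar> = ?R * \<bar>x\<bar>" using R by (simp add: abs_mult)
  have "?R * \<bar>x\<bar> < 1" using assms R by (simp add: pos_less_divide_eq mult.commute)
  then have "\<bar>?R * x\<bar> < 1" using e by simp
  then show "summable (\<lambda>m. \<bar>?R * x\<bar>^m)" by (intro summable_geometric) simp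
  show "\<exists>N. \<forall>n\<ge>N. norm (bb a n * x ^ n) \<le> \<bar>?R * x\<bar>^n"
    by (intro exI[of _ 0] allI impI) (auto simp: abs_mult power_abs power_mult_distrib intro!: mult_right_mono bb_bound)
qed


definition PP :: "real \<Rightarrow> real \<Rightarrow> real" where "PP a x = (\<Sum>m. bb a m * x^m)"
definition PP1 :: "real \<Rightarrow> real \<Rightarrow> real" where "PP1 a x = (\<Sum>m. diffs (bb a) m * x^m)"
definition PP2 :: "real \<Rightarrow> real \<Rightarrow> real" where "PP2 a x = (\<Sum>m. diffs (diffs (bb a)) m * x^m)"

lemma s1: "\<bar>x\<bar> < 1/(1+a^2) \<Longrightarrow> summable (\<lambda>m. diffs (bb a) m * x^m)"
  by (rule termdiff_converges[of x "1/(1+a^2)"]) (auto intro: bb_summable)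

lemma s2: "\<bar>x\<bar> < 1/(1+a^2) \<Longrightarrow> summable (\<lambda>m. diffs (diffs (bb a)) m * x^m)"
  by (rule termdiff_converges[of x "1/(1+a^2)"]) (auto intro: s1)

lemma d0: "\<bar>x\<bar> < 1/(1+a^2) \<Longrightarrow> DERIV (PP a) x :> PP1 a x"
  unfolding PP_def[abs_def] PP1_def
  by (rule termdiffs_strong'[of "1/(1+a^2)"]) (auto intro: bb_summable)

lemma d1: "\<bar>x\<bar> < 1/(1+a^2) \<Longrightarrow> DERIV (PP1 a) x :> PP2 a x"
  unfolding PP1_def[abs_def] PP2_def
  by (rule termdiffs_strong'[of "1/(1+a^2)"]) (auto intro: s1)

lemma ode2:
  assumes x: "\<bar>x\<bar> < 1/(1+a^2)"
  shows "4*(1-x)*PP2 a x - 2*PP1 a x - a^2*PP a x = 0"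
proof -
  have S0: "(\<lambda>m. bb a m * x^m) sums PP a x" unfolding PP_def using bb_summable[OF x] by (rule summable_sums)
  have S1: "(\<lambda>m. diffs (bb a) m * x^m) sums PP1 a x" unfolding PP1_def using s1[OF x] by (rule summable_sums)
  have S2: "(\<lambda>m. diffs (diffs (bb a)) m * x^m) sums PP2 a x" unfolding PP2_def using s2[OF x] by (rule summable_sums)
  define g where "g m = real m * (m+1) * bb a (m+1) * x^m" for m
  have "(\<lambda>m. g (Suc m)) sums (x * PP2 a x)"
  proof -
    have "(\<lambda>m. x * (diffs (diffs (bb a)) m * x^m)) sums (x * PP2 a x)" by (rule sums_mult[OF S2])
    moreover have "(\<lambda>m. x * (diffs (diffs (bb a)) m * x^m)) = (\<lambda>m. g (Suc m))"
      by (rule ext) (simp add: g_def diffs_def algebra_simps)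
    ultimately show ?thesis by simp
  qed
  then have "g sums (x * PP2 a x + g 0)" by (simp only: sums_Suc_iff)
  then have G: "g sums (x * PP2 a x)" by (simp add: g_def)
  have "(\<lambda>m. 4 * (diffs (diffs (bb a)) m * x^m) - 2 * (diffs (bb a) m * x^m) - a^2 * (bb a m * x^m))
        sums (4 * PP2 a x - 2 * PP1 a x - a^2 * PP a x)"
    by (intro sums_diff sums_mult S0 S1 S2)
  moreover have "(\<lambda>m. 4 * (diffs (diffs (bb a)) m * x^m) - 2 * (diffs (bb a) m * x^m) - a^2 * (bb a m * x^m)) = (\<lambda>m. 4 * g m)"
  proof (rule ext)
    fix m
    have r: "4*(m+2)*(m+1)*bb a (m+2) = (m+1)*(4*m+2)*bb a (m+1) + a^2 * bb a m" by (rule bb_rec)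
    have "4 * (diffs (diffs (bb a)) m) - 2 * (diffs (bb a) m) - a^2 * (bb a m) = 4 * (real m * (m+1) * bb a (m+1))"
      using r by (simp add: diffs_def algebra_simps)
    then show "4 * (diffs (diffs (bb a)) m * x^m) - 2 * (diffs (bb a) m * x^m) - a^2 * (bb a m * x^m) = 4 * g m"
      unfolding g_def by (metis (no_types, lifting) left_diff_distrib mult.assoc)
  qed
  ultimately have "(\<lambda>m. 4 * g m) sums (4 * PP2 a x - 2 * PP1 a x - a^2 * PP a x)" by simp
  moreover have "(\<lambda>m. 4 * g m) sums (4 * (x * PP2 a x))" by (rule sums_mult[OF G])
  ultimately have "4 * PP2 a x - 2 * PP1 a x - a^2 * PP a x = 4 * (x * PP2 a x)" by (rule sums_unique2)
  then show ?thesis by (simp add: algebra_simps)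
qed


lemma dsq: "x < 1 \<Longrightarrow> DERIV (\<lambda>x. sqrt (1-x)) x :> - 1/(2* sqrt(1-x))"
  by (rule derivative_eq_intros refl | simp)+ (simp add: divide_simps)

lemma rho_le: "1/(1+a^2) \<le> (1::real)" by (simp add: add_pos_nonneg)

lemma dk:
  assumes x: "\<bar>x\<bar> < 1/(1+a^2)"
  shows "DERIV (\<lambda>x. (2* sqrt(1-x)*PP1 a x + a*PP a x) * exp(a* sqrt(1-x))) x :> 0"
proof -
  have x1: "x < 1" using x rho_le[of a] by linarith
  have sp: "sqrt (1-x) > 0" using x1 by simp
  note D = dsq[OF x1] d0[OF x] d1[OF x]
  have E: "4*(1-x)*PP2 a x - 2*PP1 a x - a^2*PP a x = 0" by (rule ode2[OF x])
  show ?thesis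
    apply (rule DERIV_cong)
     apply (rule DERIV_mult)
      apply (rule DERIV_add)
       apply (rule DERIV_mult)
        apply (rule DERIV_cmult, rule D(1))
       apply (rule D(3))
      apply (rule DERIV_cmult, rule D(2))
     apply (rule DERIV_fun_exp, rule DERIV_cmult, rule D(1))
    using sp x1 E apply (simp add: field_simps power2_eq_square)
    apply (drule arg_cong[where f="\<lambda>t. t * (sqrt(1-x)*exp(a* sqrt(1-x)))"])
    apply (simp add: algebra_simps)
    done
qed


lemma dq:
  assumes x: "\<bar>x\<bar> < 1/(1+a^2)" and h: "2* sqrt(1-x)*PP1 a x + a*PP a x = 0"
  shows "DERIV (\<lambda>x. PP a x * exp(-a*(sqrt(1-x)-1))) x :> 0"
proof -
  have x1: "x < 1" using x rho_le[of a] by linarith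
  have sp: "sqrt (1-x) > 0" using x1 by simp
  note D = dsq[OF x1] d0[OF x] d1[OF x]
  have D2: "DERIV (\<lambda>x. -a*(sqrt(1-x)-1)) x :> -a * (- 1/(2* sqrt(1-x)))"
    by (rule DERIV_cmult, rule DERIV_cong, rule DERIV_diff[OF D(1) DERIV_const]) simp
  show ?thesis
    apply (rule DERIV_cong)
     apply (rule DERIV_mult)
      apply (rule D(2))
     apply (rule DERIV_fun_exp, rule D2)
    using sp x1 h apply (simp add: field_simps)
    apply (drule arg_cong[where f="\<lambda>t. t * exp(-a*(sqrt(1-x)-1))"])
    apply (simp add: algebra_simps)
    done
qed

lemma Peq:
  assumes z0: "0 < z" and z: "z < 1/(1+a^2)"
  shows "PP a z = exp(a*(sqrt(1-z)-1))"
proof -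
  have inI: "\<bar>x\<bar> < 1/(1+a^2)" if "0 \<le> x" "x \<le> z" for x using that z by simp
  define k where "k x = (2* sqrt(1-x)*PP1 a x + a*PP a x) * exp(a* sqrt(1-x))" for x
  have kd: "DERIV k x :> 0" if "0 \<le> x" "x \<le> z" for x unfolding k_def[abs_def] by (rule dk[OF inI[OF that]])
  have kc: "continuous_on {0..z} k"
    by (rule DERIV_continuous_on[where D = "\<lambda>x. 0"]) (use kd in \<open>auto intro: has_field_derivative_at_within\<close>)
  have P0: "PP a 0 = 1" unfolding PP_def by (simp add: powser_zero bb0)
  have P10: "PP1 a 0 = - a/2" unfolding PP1_def by (simp add: powser_zero diffs_def bb1[simplified])
  have k0: "k 0 = 0" unfolding k_def by (simp add: P0 P10)
  have hz: "2* sqrt(1-x)*PP1 a x + a*PP a x = 0" if "0 \<le> x" "x \<le> z" for x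
  proof -
    have "k x = k 0"
    proof (cases "x = 0")
      case False
      then have "0 < x" using that by simp
      have "continuous_on {0..x} k" by (rule continuous_on_subset[OF kc]) (use that in auto)
      then show ?thesis by (rule DERIV_isconst_end[OF \<open>0 < x\<close>]) (rule kd; use that in simp)
    qed simp
    then show ?thesis using k0 unfolding k_def by simp
  qed
  define q where "q x = PP a x * exp(-a*(sqrt(1-x)-1))" for x
  have qd: "DERIV q x :> 0" if "0 \<le> x" "x \<le> z" for x unfolding q_def[abs_def] by (rule dq[OF inI[OF that] hz[OF that]])
  have qc: "continuous_on {0..z} q"
    by (rule DERIV_continuous_on[where D = "\<lambda>x. 0"]) (use qd in \<open>auto intro: has_field_derivative_at_within\<close>)
  have "q z = q 0" by (rule DERIV_isconst_end[OF z0 qc]) (rule qd; simp)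
  then have "PP a z * exp(-a*(sqrt(1-z)-1)) = 1" unfolding q_def by (simp add: P0)
  then have "PP a z * exp(-a*(sqrt(1-z)-1)) * exp(a*(sqrt(1-z)-1)) = exp(a*(sqrt(1-z)-1))" by simp
  moreover have "exp(-a*(sqrt(1-z)-1)) * exp(a*(sqrt(1-z)-1)) = 1"
  proof -
    have "exp(-a*(sqrt(1-z)-1)) * exp(a*(sqrt(1-z)-1)) = exp(-a*(sqrt(1-z)-1) + a*(sqrt(1-z)-1))" by (rule exp_add[symmetric])
    also have "-a*(sqrt(1-z)-1) + a*(sqrt(1-z)-1) = 0" by simp
    finally show ?thesis by simp
  qed
  ultimately show ?thesis by (simp only: mult.assoc mult_1_right)
qed



lemma poch_half: "pochhammer (1/2 - real t) (t+1) = (-1)^t * fact (2*t) / (2 * 4^t * fact t)"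
proof (induction t)
  case 0 then show ?case by simp
next
  case (Suc t)
  have "pochhammer (1/2 - real (Suc t)) (Suc t + 1) = (1/2 - real (Suc t)) * pochhammer (1/2 - real t) (t+1)"
    by (simp add: pochhammer_rec algebra_simps)
  also have "\<dots> = (1/2 - real (Suc t)) * ((-1)^t * fact (2*t) / (2 * 4^t * fact t))" using Suc by simp
  also have "\<dots> = (-1)^(Suc t) * fact (2*Suc t) / (2 * 4^(Suc t) * fact (Suc t))"
  proof -
    have f2: "(fact (2*Suc t)::real) = (2*t+2)*(2*t+1)*fact(2*t)"
      by (simp add: fact_Suc algebra_simps)
    have f1: "(fact (Suc t)::real) = (t+1)*fact t" by (simp add: fact_Suc algebra_simps)
    have "fact t + fact t * real t > (0::real)" by (simp add: add_pos_nonneg)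
    then have nz: "fact t + fact t * real t \<noteq> (0::real)" by linarith
    show ?thesis unfolding f2 f1 using nz by (simp add: divide_simps) (simp add: algebra_simps)
  qed
  finally show ?case .
qed

lemma poch_neg: "u \<le> t \<Longrightarrow> (-1)^u * pochhammer (- real t) u = fact t / fact (t-u)"
proof (induction u)
  case 0 then show ?case by simp
next
  case (Suc u)
  then have ut: "u < t" by simp
  have ft: "fact (t-u) = real (t-u) * fact (t - Suc u)"
    using ut by (metis Suc_diff_Suc fact_Suc of_nat_mult)
  have "(-1)^Suc u * pochhammer (- real t) (Suc u) = ((-1)^u * pochhammer (- real t) u) * (real t - real u)"
    by (simp add: pochhammer_Suc algebra_simps)
  also have "\<dots> = fact t / fact (t-u) * (real t - real u)" using Suc ut by simp
  also have "\<dots> = fact t / fact (t - Suc u)" using ut by (simp add: ft of_nat_diff field_simps)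
  finally show ?case .
qed


lemma bt_even: "1 \<le> u \<Longrightarrow> u \<le> t \<Longrightarrow> bt (t+u) (2*u) = fact(2*t-1)/(2^(2*t)*fact(t-u)*fact(t+u)*fact(2*u-1))"
  by (simp add: bt_def)

lemma bt_odd: "u \<le> t \<Longrightarrow> bt (t+u+1) (2*u+1) = - fact(2*t)/(2^(2*t+1)*fact(t-u)*fact(t+u+1)*fact(2*u))"
  by (simp add: bt_def)

lemma kappa_pow: fixes w :: real shows "(pi* sqrt(2/3)*w)^(2*u) = 24^u * (pi^2/36)^u * w^(2*u)"
proof -
  have "(pi* sqrt(2/3)*w)^(2*u) = ((pi* sqrt(2/3)*w)^2)^u" by (simp add: power_mult)
  also have "(pi* sqrt(2/3)*w)^2 = 24 * (pi^2/36) * w^2" by (simp add: power_mult_distrib)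
  also have "(24 * (pi^2/36) * w^2)^u = 24^u * (pi^2/36)^u * (w^2)^u" by (simp only: power_mult_distrib)
  also have "(w^2)^u = w^(2*u)" by (simp add: power_mult)
  finally show ?thesis .
qed

lemma alg_even:
  fixes X Q A B C Y P V Z W s T tt :: real
  assumes "s* s = 1" "Q \<noteq> 0" "A \<noteq> 0" "B \<noteq> 0" "C \<noteq> 0" "Y \<noteq> 0" "V \<noteq> 0" "Z \<noteq> 0" "W \<noteq> 0" "T \<noteq> 0" "tt \<noteq> 0"
  shows "X/(Q*A*B*C) * (Y*P*V) * (1/(Z*Y*W*V)) = s/Z * (s*(2*tt*X)/(2*Q*T)/tt) * (T/A/(B*C)*P)/W"
proof -
  have "s/Z * (s*(2*tt*X)/(2*Q*T)/tt) * (T/A/(B*C)*P)/W = (s* s) * (X/(Q*A*B*C) * (Y*P*V) * (1/(Z*Y*W*V)))"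
    using assms by (simp add: field_simps)
  then show ?thesis using assms(1) by simp
qed

lemma even_term:
  fixes w :: real
  assumes w: "w > 0" and u: "1 \<le> u" "u \<le> t"
  shows "bt (t+u) (2*u) * (pi* sqrt(2/3)*w)^(2*u) * (1/(24*w^2))^(t+u)
    = (((-1)^t / 24^t) * (pochhammer (1/2 - real t) (t+1) / real t)) *
      (((-1)^u * pochhammer (- real t) u / (fact (t+u) * fact (2*u-1))) * (pi^2/36)^u) / w^(2*t)"
proof -
  have t: "t \<ge> 1" using u by simp
  have f2: "(fact (2*t)::real) = (2 * real t) * fact (2*t-1)"
  proof -
    have "2*t = Suc (2*t-1)" using t by simp
    then have "(fact (2*t)::real) = real (Suc (2*t-1)) * fact (2*t-1)" by (metis fact_Suc)
    then show ?thesis using t by simp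
  qed
  have pw: "(1/(24*w^2))^(t+u) = 1/(24^t * 24^u * w^(2*t) * w^(2*u))"
    by (simp add: power_mult_distrib power_add power_mult[symmetric] power_one_over)
  have m1: "(-1::real)^t * (-1)^t = 1" by (simp add: power_mult_distrib[symmetric])
  have ft: "fact t > (0::real)" by simp
  have four: "(2::real)^(2*t) = 4^t" by (simp add: power_mult)
  show ?thesis
    unfolding bt_even[OF u] kappa_pow pw poch_half mult.assoc[of "(-1)^u"] poch_neg[OF u(2)]
    unfolding f2 four
    by (rule alg_even[OF m1]) (use w t in auto)
qed


lemma kap: "pi* sqrt(2/3)/24 = pi/(12* sqrt 6)"
proof -
  have "sqrt(2/3) * sqrt 6 = 2" by (simp add: real_sqrt_mult[symmetric])
  then have "sqrt(2/3) = 2 / sqrt 6" by (simp add: field_simps)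
  then show ?thesis by simp
qed

lemma alg_odd:
  fixes X Q A B C Y P V Z W s T K w :: real
  assumes "s* s = 1" "Q \<noteq> 0" "A \<noteq> 0" "B \<noteq> 0" "C \<noteq> 0" "Y \<noteq> 0" "V \<noteq> 0" "Z \<noteq> 0" "W \<noteq> 0" "T \<noteq> 0" "w \<noteq> 0"
  shows "- X/(2*Q*A*B*C) * ((24*K)*w*(Y*P*V)) * (1/(Z*Y*24*W*V*w^2)) = - K * (s*(s*X/(2*Q*T))/Z) * (T/A/(B*C)*P)/(W*w)"
proof -
  have "- K * (s*(s*X/(2*Q*T))/Z) * (T/A/(B*C)*P)/(W*w) = (s* s) * (- X/(2*Q*A*B*C) * ((24*K)*w*(Y*P*V)) * (1/(Z*Y*24*W*V*w^2)))"
    using assms by (simp add: field_simps power2_eq_square)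
  then show ?thesis using assms(1) by simp
qed

lemma odd_term:
  fixes w :: real
  assumes w: "w > 0" and u: "u \<le> t"
  shows "bt (t+u+1) (2*u+1) * (pi* sqrt(2/3)*w)^(2*u+1) * (1/(24*w^2))^(t+u+1)
    = - (pi / (12 * sqrt 6)) * ((-1)^t * pochhammer (1/2 - real t) (t+1) / 24^t) *
      (((-1)^u * pochhammer (- real t) u / (fact (t+u+1) * fact (2*u))) * (pi^2/36)^u) / w^(2*t+1)"
proof -
  have pw: "(1/(24*w^2))^(t+u+1) = 1/(24^t * 24^u * 24 * w^(2*t) * w^(2*u) * w^2)"
    by (simp add: power_mult_distrib power_add power_mult[symmetric] power_one_over)
  have kp: "(pi* sqrt(2/3)*w)^(2*u+1) = (24*(pi/(12* sqrt 6)))*w*(24^u * (pi^2/36)^u * w^(2*u))"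
    unfolding kap[symmetric] power_add by (simp add: kappa_pow)
  have m1: "(-1::real)^t * (-1)^t = 1" by (simp add: power_mult_distrib[symmetric])
  have four: "(2::real)^(2*t+1) = 2*4^t" by (simp add: power_mult)
  have w2: "w^(2*t+1) = w^(2*t)*w" by simp
  show ?thesis
    unfolding bt_odd[OF u] kp pw poch_half mult.assoc[of "(-1)^u"] poch_neg[OF u] four w2
    by (rule alg_odd[OF m1]) (use w in auto)
qed


lemma even_sum:
  fixes w :: real
  assumes w: "w > 0"
  shows "(\<Sum>u\<le>t. bt (t+u) (2*u) * (pi* sqrt(2/3)*w)^(2*u) * (1/(24*w^2))^(t+u)) = e1 t / w^(2*t)"
proof (cases "t = 0")
  case True then show ?thesis by (simp add: e1_def bt_def)
next
  case False
  then have t: "t \<ge> 1" by simp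
  have "{..t} = insert 0 {1..t}" by auto
  then have "(\<Sum>u\<le>t. bt (t+u) (2*u) * (pi* sqrt(2/3)*w)^(2*u) * (1/(24*w^2))^(t+u))
      = (\<Sum>u=1..t. bt (t+u) (2*u) * (pi* sqrt(2/3)*w)^(2*u) * (1/(24*w^2))^(t+u))"
    using t by (simp add: bt_def)
  also have "\<dots> = (\<Sum>u=1..t. (((-1)^t / 24^t) * (pochhammer (1/2 - real t) (t+1) / real t)) *
      (((-1)^u * pochhammer (- real t) u / (fact (t+u) * fact (2*u-1))) * (pi^2/36)^u) / w^(2*t))"
    by (rule sum.cong[OF refl]) (rule even_term[OF w]; simp)
  also have "\<dots> = e1 t / w^(2*t)"
    unfolding e1_def using t by (simp add: sum_distrib_left sum_divide_distrib)
  finally show ?thesis .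
qed

lemma odd_sum:
  fixes w :: real
  assumes w: "w > 0"
  shows "(\<Sum>u\<le>t. bt (t+u+1) (2*u+1) * (pi* sqrt(2/3)*w)^(2*u+1) * (1/(24*w^2))^(t+u+1)) = o1 t / w^(2*t+1)"
proof -
  have "(\<Sum>u\<le>t. bt (t+u+1) (2*u+1) * (pi* sqrt(2/3)*w)^(2*u+1) * (1/(24*w^2))^(t+u+1))
     = (\<Sum>u\<le>t. - (pi / (12 * sqrt 6)) * ((-1)^t * pochhammer (1/2 - real t) (t+1) / 24^t) *
      (((-1)^u * pochhammer (- real t) u / (fact (t+u+1) * fact (2*u))) * (pi^2/36)^u) / w^(2*t+1))"
    by (rule sum.cong[OF refl]) (rule odd_term[OF w]; simp)
  also have "\<dots> = o1 t / w^(2*t+1)"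
    unfolding o1_def by (simp add: sum_distrib_left sum_divide_distrib atMost_atLeast0)
  finally show ?thesis .
qed


theorem mainTheorem4:
  fixes n :: nat
  assumes "n \<ge> 1"
  shows "\<exists>A B. (\<lambda>t. e1 t * real n powr (- real t)) sums A
             \<and> (\<lambda>t. o1 t * real n powr (- (2 * real t + 1) / 2)) sums B
             \<and> exp (pi * sqrt (2 * real n / 3) * (sqrt (1 - 1 / (24 * real n)) - 1)) = A + B"
proof -
  define w where "w = sqrt (real n)"
  have n0: "real n > 0" using assms by simp
  have w0: "w > 0" unfolding w_def using n0 by simp
  have nw: "real n = w^2" unfolding w_def using n0 by simp
  define a where "a = pi * sqrt (2 * real n / 3)"
  define z where "z = 1 / (24 * real n)"
  have aw: "a = pi* sqrt(2/3)*w" unfolding a_def w_def by (simp add: real_sqrt_mult[symmetric])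
  have zw: "z = 1/(24*w^2)" unfolding z_def nw ..
  have z0: "z > 0" unfolding z_def using n0 by simp
  have a2: "a^2 = pi^2 * (2 * real n / 3)" unfolding a_def by (simp add: power_mult_distrib)
  have zlt: "z < 1/(1+a^2)"
  proof -
    have "pi^2 < 4^2" using pi_less_4 pi_gt_zero by (intro power_strict_mono) auto
    then have "pi^2 * real n < 16 * real n" using n0 by (intro mult_strict_right_mono) auto
    moreover have "real n \<ge> 1" using assms by simp
    ultimately have lt: "1 + a^2 < 24 * real n" unfolding a2 by linarith
    have pos: "0 < 1 + a^2" by (simp add: add_pos_nonneg)
    have "1 / (24 * real n) < 1 / (1 + a^2)"
      by (rule divide_strict_left_mono[OF lt]) (use pos n0 in auto)
    then show ?thesis unfolding z_def .
  qed
  have zabs: "\<bar>z\<bar> < 1/(1+(-\<bar>a\<bar>)^2)" using zlt z0 by simp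
  define F where "F p = bt (fst p) (snd p) * a^(snd p) * z^(fst p)" for p :: "nat \<times> nat"
  define S where "S = Sigma (UNIV::nat set) (\<lambda>m. {..m})"
  have inner_abs: "(\<Sum>k\<le>m. norm (F (m,k))) = bb (-\<bar>a\<bar>) m * z^m" for m
  proof -
    have "(\<Sum>k\<le>m. norm (F (m,k))) = (\<Sum>k\<le>m. \<bar>bt m k * a^k\<bar>) * z^m"
      unfolding F_def using z0 by (simp add: sum_distrib_right abs_mult)
    then show ?thesis by (simp add: bb_abs)
  qed
  have bbnn: "bb (-\<bar>a\<bar>) m * z^m \<ge> 0" for m
    using inner_abs[of m] by (metis (no_types, lifting) norm_ge_zero sum_nonneg)
  have "summable (\<lambda>m. bb (-\<bar>a\<bar>) m * z^m)" by (rule bb_summable[OF zabs])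
  then have "(\<lambda>m. bb (-\<bar>a\<bar>) m * z^m) summable_on UNIV"
    by (rule iffD2[OF summable_on_UNIV_nonneg_real_iff, OF bbnn])
  then have "(\<lambda>m. norm (infsum (\<lambda>k. norm (F (m,k))) {..m})) summable_on UNIV"
    using bbnn inner_abs by simp
  then have outer: "(\<lambda>m. norm (infsum (\<lambda>k. norm (F (m,k))) {..m})) summable_on UNIV" .
  have fin: "(\<lambda>k. norm (F (m,k))) summable_on {..m}" for m by (rule summable_on_finite) simp
  have "(\<lambda>p. norm (F p)) summable_on S" unfolding S_def
    by (rule iffD2[OF Infinite_Sum.abs_summable_on_Sigma_iff], intro conjI ballI fin outer)
  then have Fsum: "F summable_on S" by (rule iffD2[OF summable_on_iff_abs_summable_on_real])
  define X where "X = infsum F S"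
  have FX: "(F has_sum X) S" unfolding X_def using Fsum by simp
  have "((\<lambda>m. \<Sum>k\<le>m. F (m,k)) has_sum X) UNIV"
    by (rule has_sum_SigmaD[OF FX[unfolded S_def]]) simp
  then have "(\<lambda>m. \<Sum>k\<le>m. F (m,k)) sums X" by (rule has_sum_imp_sums)
  moreover have "(\<lambda>m. \<Sum>k\<le>m. F (m,k)) = (\<lambda>m. bb a m * z^m)"
    unfolding F_def bb_def by (simp add: sum_distrib_right)
  ultimately have s1: "(\<lambda>m. bb a m * z^m) sums X" by simp
  have "(\<lambda>m. bb a m * z^m) sums PP a z" unfolding PP_def
    by (rule summable_sums, rule bb_summable) (use zlt z0 in simp)
  then have "X = PP a z" using s1 by (rule sums_unique2[symmetric])
  also have "\<dots> = exp (a*(sqrt(1-z)-1))" by (rule Peq[OF z0 zlt])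
  finally have Xexp: "X = exp (a*(sqrt(1-z)-1))" .
  define T where "T = Sigma (UNIV::nat set) (\<lambda>t. {..t})"
  define he where "he p = (fst p + snd p, 2 * snd p)" for p :: "nat \<times> nat"
  define ho where "ho p = (fst p + snd p + 1, 2 * snd p + 1)" for p :: "nat \<times> nat"
  have inje: "inj_on he T" unfolding he_def inj_on_def by auto
  have injo: "inj_on ho T" unfolding ho_def inj_on_def by auto
  have disj: "he ` T \<inter> ho ` T = {}"
  proof (rule ccontr)
    assume "he ` T \<inter> ho ` T \<noteq> {}"
    then obtain p q where "he p = ho q" by blast
    then have "2 * snd p = 2 * snd q + 1" unfolding he_def ho_def by simp
    then show False by presburger
  qed
  have un: "S = he ` T \<union> ho ` T"
  proof (rule set_eqI, rule iffI)
    fix p assume p: "p \<in> S"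
    obtain m k where pmk: "p = (m,k)" and km: "k \<le> m" using p unfolding S_def by auto
    show "p \<in> he ` T \<union> ho ` T"
    proof (cases "even k")
      case True
      then obtain u where u: "k = 2*u" by (auto elim: evenE)
      have "p = he (m - u, u)" "(m - u, u) \<in> T" using pmk km u unfolding he_def T_def by auto
      then show ?thesis by blast
    next
      case False
      then obtain u where u: "k = 2*u+1" by (auto elim: oddE)
      have "p = ho (m - u - 1, u)" "(m - u - 1, u) \<in> T" using pmk km u unfolding ho_def T_def by auto
      then show ?thesis by blast
    qed
  next
    fix p assume "p \<in> he ` T \<union> ho ` T"
    then show "p \<in> S" unfolding S_def T_def he_def ho_def by auto
  qed
  have sE: "F summable_on (he ` T)" by (rule summable_on_subset_banach[OF Fsum]) (simp add: un)
  have sO: "F summable_on (ho ` T)" by (rule summable_on_subset_banach[OF Fsum]) (simp add: un)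
  define A where "A = infsum F (he ` T)"
  define B where "B = infsum F (ho ` T)"
  have hA: "(F has_sum A) (he ` T)" unfolding A_def using sE by simp
  have hB: "(F has_sum B) (ho ` T)" unfolding B_def using sO by simp
  have "(F has_sum (A + B)) S" unfolding un by (rule has_sum_Un_disjoint[OF hA hB disj])
  then have XAB: "X = A + B" using FX by (rule has_sum_unique[symmetric])
  have hEA: "((F \<circ> he) has_sum A) T" using hA has_sum_reindex[OF inje] by blast
  then have "((\<lambda>t. \<Sum>u\<le>t. (F \<circ> he) (t,u)) has_sum A) UNIV"
    by (intro has_sum_SigmaD[OF hEA[unfolded T_def]]) simp
  then have sA: "(\<lambda>t. \<Sum>u\<le>t. (F \<circ> he) (t,u)) sums A" by (rule has_sum_imp_sums)
  have hOB: "((F \<circ> ho) has_sum B) T" using hB has_sum_reindex[OF injo] by blast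
  then have "((\<lambda>t. \<Sum>u\<le>t. (F \<circ> ho) (t,u)) has_sum B) UNIV"
    by (intro has_sum_SigmaD[OF hOB[unfolded T_def]]) simp
  then have sB: "(\<lambda>t. \<Sum>u\<le>t. (F \<circ> ho) (t,u)) sums B" by (rule has_sum_imp_sums)
  have eqA: "(\<Sum>u\<le>t. (F \<circ> he) (t,u)) = e1 t * real n powr (- real t)" for t
  proof -
    have "(\<Sum>u\<le>t. (F \<circ> he) (t,u)) = (\<Sum>u\<le>t. bt (t+u) (2*u) * (pi* sqrt(2/3)*w)^(2*u) * (1/(24*w^2))^(t+u))"
      unfolding F_def he_def aw zw by simp
    also have "\<dots> = e1 t / w^(2*t)" by (rule even_sum[OF w0])
    also have "real n powr (- real t) = 1 / w^(2*t)"
      using n0 by (simp add: powr_minus powr_realpow nw power_mult divide_inverse)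
    ultimately show ?thesis by simp
  qed
  have eqB: "(\<Sum>u\<le>t. (F \<circ> ho) (t,u)) = o1 t * real n powr (- (2 * real t + 1) / 2)" for t
  proof -
    have "(\<Sum>u\<le>t. (F \<circ> ho) (t,u)) = (\<Sum>u\<le>t. bt (t+u+1) (2*u+1) * (pi* sqrt(2/3)*w)^(2*u+1) * (1/(24*w^2))^(t+u+1))"
      unfolding F_def ho_def aw zw by simp
    also have "\<dots> = o1 t / w^(2*t+1)" by (rule odd_sum[OF w0])
    also have "real n powr (- (2 * real t + 1) / 2) = 1 / w^(2*t+1)"
    proof -
      have "real n powr ((2 * real t + 1) / 2) = (real n powr (1/2)) powr (real (2*t+1))"
        by (simp add: powr_powr add.commute)
      also have "\<dots> = w powr (real (2*t+1))" unfolding w_def using n0 by (simp add: powr_half_sqrt)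
      also have "\<dots> = w^(2*t+1)" by (rule powr_realpow[OF w0])
      finally have "real n powr ((2 * real t + 1) / 2) = w^(2*t+1)" .
      moreover have "- (2 * real t + 1) / 2 = - ((2 * real t + 1) / 2)" by (rule minus_divide_left[symmetric])
      ultimately show ?thesis by (simp only: powr_minus inverse_eq_divide)
    qed
    ultimately show ?thesis by simp
  qed
  have "exp (pi * sqrt (2 * real n / 3) * (sqrt (1 - 1 / (24 * real n)) - 1)) = A + B"
    using Xexp XAB unfolding a_def z_def by simp
  moreover have "(\<lambda>t. e1 t * real n powr (- real t)) sums A" using sA eqA by simp
  moreover have "(\<lambda>t. o1 t * real n powr (- (2 * real t + 1) / 2)) sums B" using sB eqB by simp
  ultimately show ?thesis by blast
qed


end
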